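(* Let $A,B\in\mathbb{R}$ and let $f=f_1+f_2\mathbf{j}$ on $\mathbb{H}\cong\mathbb{C}^2$ with $f_1=z_1+\overline z_1+z_2+\overline z_2+A$ and $f_2=-z_1-\overline z_1+z_2+\overline z_2+B$. Then $f$ is hyperholomorphic, and its right inverse $f^{-1}$ is hyperholomorphic outside the zero set of $f$. Moreover, for $A=B=0$, the zero set of $f$ is $\{x_1=0,\ x_2=0\}\subset\mathbb{R}^4$, where $z_k=x_k+iy_k$ with $x_k,y_k\in\mathbb{R}$.
   Context: Quaternions are written $q=z_1+z_2\mathbf{j}$ with $z_1,z_2\in\mathbb{C}$, $\mathbf{j}^2=-1$, $z\mathbf{j}=\mathbf{j}\overline z$ for $z\in\mathbb{C}$. A function $f:U\to\mathbb{H}$ is written $f=f_1+f_2\mathbf{j}$ with $f_1,f_2$ complex valued. The right inverse of $f$ is $f^{-1}=(|f_1|^2+|f_2|^2)^{-1}(\overline f_1-f_2\mathbf{j})$, defined where $f\neq0$. The modified Cauchy–Fueter operator is $\mathcal{D}f=\frac12\big(\frac{\partial f_1}{\partial\overline z_1}-\frac{\partial\overline f_2}{\partial z_2}\big)+\mathbf{j}\,\frac12\big(\frac{\partial f_1}{\partial\overline z_2}+\frac{\partial\overline f_2}{\partial z_1}\big)$, and $f$ is hyperholomorphic if $\mathcal{D}f=0$. *)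

theory Defs
  imports "HOL-Analysis.Analysis"
begin

text \<open>Quaternions q = z1 + z2 j are represented by the pair (z1, z2) of complex numbers;
  points of H = C^2 are pairs (z1, z2).  A quaternion-valued function f = f1 + f2 j is
  represented by its two complex components f1 f2 :: complex \<times> complex \<Rightarrow> complex.\<close>

type_synonym C2 = "complex \<times> complex"

definition dirderiv :: "(C2 \<Rightarrow> complex) \<Rightarrow> C2 \<Rightarrow> C2 \<Rightarrow> complex" where
  "dirderiv g p v = vector_derivative (\<lambda>t::real. g (p + t *\<^sub>R v)) (at 0)"

definition dz1 :: "(C2 \<Rightarrow> complex) \<Rightarrow> C2 \<Rightarrow> complex" where
  "dz1 g p = (dirderiv g p (1, 0) - \<i> * dirderiv g p (\<i>, 0)) / 2"
definition dz2 :: "(C2 \<Rightarrow> complex) \<Rightarrow> C2 \<Rightarrow> complex" where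
  "dz2 g p = (dirderiv g p (0, 1) - \<i> * dirderiv g p (0, \<i>)) / 2"
definition dzbar1 :: "(C2 \<Rightarrow> complex) \<Rightarrow> C2 \<Rightarrow> complex" where
  "dzbar1 g p = (dirderiv g p (1, 0) + \<i> * dirderiv g p (\<i>, 0)) / 2"
definition dzbar2 :: "(C2 \<Rightarrow> complex) \<Rightarrow> C2 \<Rightarrow> complex" where
  "dzbar2 g p = (dirderiv g p (0, 1) + \<i> * dirderiv g p (0, \<i>)) / 2"

text \<open>Modified Cauchy--Fueter operator, D f = (first component) + j (second component);
  returned as the pair of the two complex components.\<close>
definition CF :: "(C2 \<Rightarrow> complex) \<Rightarrow> (C2 \<Rightarrow> complex) \<Rightarrow> C2 \<Rightarrow> complex \<times> complex" where
  "CF f1 f2 p =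
     ((dzbar1 f1 p - dz2 (\<lambda>q. cnj (f2 q)) p) / 2,
      (dzbar2 f1 p + dz1 (\<lambda>q. cnj (f2 q)) p) / 2)"

definition hyperholomorphic_on :: "(C2 \<Rightarrow> complex) \<Rightarrow> (C2 \<Rightarrow> complex) \<Rightarrow> C2 set \<Rightarrow> bool" where
  "hyperholomorphic_on f1 f2 U \<longleftrightarrow>
     open U \<and> (\<forall>p\<in>U. f1 differentiable (at p) \<and> f2 differentiable (at p) \<and> CF f1 f2 p = (0, 0))"

text \<open>Right inverse f^{-1} = (|f1|^2+|f2|^2)^{-1} (conj f1 - f2 j), components.\<close>
definition rinv1 :: "(C2 \<Rightarrow> complex) \<Rightarrow> (C2 \<Rightarrow> complex) \<Rightarrow> C2 \<Rightarrow> complex" where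
  "rinv1 f1 f2 p = cnj (f1 p) / complex_of_real ((cmod (f1 p))\<^sup>2 + (cmod (f2 p))\<^sup>2)"
definition rinv2 :: "(C2 \<Rightarrow> complex) \<Rightarrow> (C2 \<Rightarrow> complex) \<Rightarrow> C2 \<Rightarrow> complex" where
  "rinv2 f1 f2 p = - f2 p / complex_of_real ((cmod (f1 p))\<^sup>2 + (cmod (f2 p))\<^sup>2)"

definition zero_set :: "(C2 \<Rightarrow> complex) \<Rightarrow> (C2 \<Rightarrow> complex) \<Rightarrow> C2 set" where
  "zero_set f1 f2 = {p. f1 p = 0 \<and> f2 p = 0}"

end

theory Submission
  imports Defs
begin

lemma dd_comp:
  fixes u v :: "C2 \<Rightarrow> real" and F :: "real \<Rightarrow> real \<Rightarrow> real"
  assumes "\<And>t. u (p + t *\<^sub>R w) = u p + t * cu" "\<And>t. v (p + t *\<^sub>R w) = v p + t * cv"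
  and "((\<lambda>t. F (u p + t*cu) (v p + t*cv)) has_real_derivative D) (at 0)"
  shows "dirderiv (\<lambda>q. complex_of_real (F (u q) (v q))) p w = of_real D"
proof -
  have "((\<lambda>t::real. complex_of_real (F (u (p + t *\<^sub>R w)) (v (p + t *\<^sub>R w)))) has_vector_derivative of_real D) (at 0)"
    unfolding assms(1,2) by (rule has_vector_derivative_of_real[OF assms(3)])
  then show ?thesis unfolding dirderiv_def by (rule vector_derivative_at)
qed

lemma diff_real:
  fixes g :: "C2 \<Rightarrow> real"
  assumes "g differentiable (at p)"
  shows "(\<lambda>q. complex_of_real (g q)) differentiable (at p)"
  using differentiable_compose[OF _ assms, of complex_of_real] bounded_linear_of_real
  by (simp add: o_def bounded_linear_imp_differentiable)

theorem proposition3p3: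
  fixes A B :: real
  defines "f1 \<equiv> (\<lambda>(z1, z2). z1 + cnj z1 + z2 + cnj z2 + complex_of_real A)"
    and "f2 \<equiv> (\<lambda>(z1, z2). - z1 - cnj z1 + z2 + cnj z2 + complex_of_real B)"
  shows "hyperholomorphic_on f1 f2 UNIV
         \<and> hyperholomorphic_on (rinv1 f1 f2) (rinv2 f1 f2) (- zero_set f1 f2)
         \<and> (A = 0 \<and> B = 0 \<longrightarrow> zero_set f1 f2 = {(z1, z2). Re z1 = 0 \<and> Re z2 = 0})"
proof -
  define u where "u = (\<lambda>q::C2. 2 * Re (fst q) + 2 * Re (snd q) + A)"
  define v where "v = (\<lambda>q::C2. - 2 * Re (fst q) + 2 * Re (snd q) + B)"
  have uL: "u (p + t *\<^sub>R w) = u p + t * (2 * Re (fst w) + 2 * Re (snd w))" for p w t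
    by (simp add: u_def algebra_simps)
  have vL: "v (p + t *\<^sub>R w) = v p + t * (- 2 * Re (fst w) + 2 * Re (snd w))" for p w t
    by (simp add: v_def algebra_simps)
  have F1: "f1 = (\<lambda>q. complex_of_real ((\<lambda>x y. x) (u q) (v q)))"
    by (auto simp: f1_def u_def complex_eq_iff)
  have F2: "f2 = (\<lambda>q. complex_of_real ((\<lambda>x y. y) (u q) (v q)))"
    by (auto simp: f2_def v_def complex_eq_iff)
  have F2c: "(\<lambda>q. cnj (f2 q)) = (\<lambda>q. complex_of_real ((\<lambda>x y. y) (u q) (v q)))"
    by (auto simp: f2_def v_def complex_eq_iff)
  have bl1: "bounded_linear (\<lambda>x::C2. Re (fst x))"
    by (rule bounded_linear_compose[OF bounded_linear_Re bounded_linear_fst])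
  have bl2: "bounded_linear (\<lambda>x::C2. Re (snd x))"
    by (rule bounded_linear_compose[OF bounded_linear_Re bounded_linear_snd])
  have ud: "u differentiable (at p)" for p unfolding u_def
    using bl1 bl2 by (intro derivative_intros; simp add: bounded_linear_imp_differentiable)
  have vd: "v differentiable (at p)" for p unfolding v_def
    using bl1 bl2 by (intro derivative_intros; simp add: bounded_linear_imp_differentiable)
  define lu where "lu = (\<lambda>w::C2. 2 * Re (fst w) + 2 * Re (snd w))"
  define lv where "lv = (\<lambda>w::C2. - 2 * Re (fst w) + 2 * Re (snd w))"
  have D1: "dirderiv f1 p w = of_real (lu w)" for p w
    unfolding F1 lu_def
    by (rule dd_comp[where F="\<lambda>x y. x", OF uL vL]) (auto intro!: derivative_eq_intros)
  have D2: "dirderiv (\<lambda>q. cnj (f2 q)) p w = of_real (lv w)" for p w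
    unfolding F2c lv_def
    by (rule dd_comp[where F="\<lambda>x y. y", OF uL vL]) (auto intro!: derivative_eq_intros)
  have part1: "hyperholomorphic_on f1 f2 UNIV"
    unfolding hyperholomorphic_on_def
  proof (intro conjI ballI open_UNIV)
    fix p :: C2
    show "f1 differentiable (at p)" unfolding F1 by (rule diff_real[OF ud])
    show "f2 differentiable (at p)" unfolding F2 by (rule diff_real[OF vd])
    show "CF f1 f2 p = (0, 0)"
      unfolding CF_def dzbar1_def dzbar2_def dz1_def dz2_def D1 D2
      by (simp add: lu_def lv_def)
  qed
  define N where "N = (\<lambda>q. u q ^ 2 + v q ^ 2)"
  have R1: "rinv1 f1 f2 = (\<lambda>q. complex_of_real ((\<lambda>x y. x / (x^2 + y^2)) (u q) (v q)))"
    by (auto simp: rinv1_def F1 F2)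
  have R2: "rinv2 f1 f2 = (\<lambda>q. complex_of_real ((\<lambda>x y. - y / (x^2 + y^2)) (u q) (v q)))"
    by (auto simp: rinv2_def F1 F2)
  have ZS: "zero_set f1 f2 = {q. N q = 0}"
    by (auto simp: zero_set_def F1 F2 N_def sum_power2_eq_zero_iff)
  have E1: "dirderiv (rinv1 f1 f2) p w = of_real ((lu w * N p - u p * (2 * u p * lu w + 2 * v p * lv w)) / (N p)^2)"
    if "N p \<noteq> 0" for p w
    unfolding R1
    apply (rule dd_comp[OF uL vL])
    using that unfolding N_def lu_def lv_def
    apply (auto intro!: derivative_eq_intros)
    apply (simp_all add: power2_eq_square algebra_simps)
    done
  have E2: "dirderiv (rinv2 f1 f2) p w = of_real (- (lv w * N p - v p * (2 * u p * lu w + 2 * v p * lv w)) / (N p)^2)"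
    if "N p \<noteq> 0" for p w
    unfolding R2
    apply (rule dd_comp[OF uL vL])
    using that unfolding N_def lu_def lv_def
    apply (auto intro!: derivative_eq_intros)
    apply (simp_all add: power2_eq_square algebra_simps)
    done
  have cR2: "(\<lambda>q. cnj (rinv2 f1 f2 q)) = rinv2 f1 f2"
    by (simp add: R2)
  have part2: "hyperholomorphic_on (rinv1 f1 f2) (rinv2 f1 f2) (- zero_set f1 f2)"
    unfolding hyperholomorphic_on_def
  proof (intro conjI ballI)
    have cN: "continuous_on UNIV N" unfolding N_def u_def v_def by (intro continuous_intros)
    have "open {q. N q \<noteq> 0}"
      using open_Collect_neq[OF cN continuous_on_const[of UNIV 0]] by simp
    then show "open (- zero_set f1 f2)" by (simp add: ZS Compl_eq)
    fix p :: C2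
    assume "p \<in> - zero_set f1 f2"
    then have Np: "N p \<noteq> 0" by (simp add: ZS)
    show "rinv1 f1 f2 differentiable (at p)" unfolding R1
      by (rule diff_real) (use Np in \<open>auto simp: N_def intro!: derivative_intros ud vd\<close>)
    show "rinv2 f1 f2 differentiable (at p)" unfolding R2
      by (rule diff_real) (use Np in \<open>auto simp: N_def intro!: derivative_intros ud vd\<close>)
    show "CF (rinv1 f1 f2) (rinv2 f1 f2) p = (0, 0)"
      unfolding CF_def dzbar1_def dzbar2_def dz1_def dz2_def cR2 E1[OF Np] E2[OF Np]
      using Np by (simp add: lu_def lv_def N_def algebra_simps add_divide_distrib[symmetric] diff_divide_distrib[symmetric] power2_eq_square)
  qed
  have part3: "A = 0 \<and> B = 0 \<longrightarrow> zero_set f1 f2 = {(z1, z2). Re z1 = 0 \<and> Re z2 = 0}"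
    by (auto simp: ZS N_def u_def v_def sum_power2_eq_zero_iff)
  show ?thesis using part1 part2 part3 by blast
qed

end
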